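(* In the setting of the context, let $\theta^*$ be an indifference index consistent with the inverse problem and $X^{m,s}$ a corresponding solution, and let $\hat R_{m,s}(x)=G(x,\theta^*(x))-\varphi_{m,s}(x)V(\theta^*(x))$ on $X^*(\Theta)$. If the function $R_{m,s}(x)=G(x,\theta^*(x))+\varphi_{m,s}(x)(R_{m,s}(X_0)-V(\theta^*(x)))$ solves $\frac12\frac{d}{dm}\frac{d}{ds}f=\rho f-c$, then so does $\hat R_{m,s}$.
   Context: Data: $\rho>0$, an interval $\Theta$, a differentiable $V:\Theta\to\mathbb{R}$, a twice continuously differentiable $G(x,\theta)$, a running reward $c(x)$, a starting point $X_0$. For a speed measure $m$ and strictly increasing continuous scale $s$, $X^{m,s}$ is the regular one-dimensional generalised diffusion with these characteristics on state space $I^m$ started at $X_0$ (either both endpoints non-reflecting, or started at a reflecting endpoint with the other non-reflecting); $\mathrm{int}(I^m)$ is the interior plus accessible boundary points. $X^{m,s}$ solves the inverse problem if $V_{X^{m,s}}(\theta):=\sup_\tau\mathbb{E}_{X_0}[\int_0^\tau e^{-\rho t}c(X^{m,s}_t)dt+e^{-\rho\tau}G(X^{m,s}_\tau,\theta)]=V(\theta)$ for all $\theta$ and the value is attained by stopping at the hitting time of a threshold $\ge X_0$. $\varphi_{m,s}$ is the increasing positive solution of $\frac12\frac{d}{dm}\frac{d}{ds}f=\rho f$ with $\varphi_{m,s}(X_0)=1$; $R_{m,s}(X_0)=\mathbb{E}_{X_0}[\int_0^\infty e^{-\rho t}c(X^{m,s}_t)dt]$. $X^*(\theta)=\arg\max_{x\in\mathrm{int}(I^m)}(G(x,\theta)-R_{m,s}(x))/\varphi_{m,s}(x)$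 and $X^*(\Theta)=\bigcup_\theta X^*(\theta)$. An indifference index $\theta^*:I^m\to\Theta$ is consistent if for some solution $X^{m,s}$, $x^*=(\theta^* )^{-1}$ is an optimal threshold strategy, i.e. $x\in X^*(\theta^*(x))$. *)

theory Defs
  imports "HOL-Analysis.Analysis"
begin

text \<open>Generalised second-order equation  (1/2) d/dm d/ds f = g  on a set S,
  in integrated (Feller) form: f has an s-derivative Df with
  f y - f x = int_{(x,y]} Df ds  and  Df y - Df x = int_{(x,y]} 2 g dm  for x < y in S.
  The s-integral is taken w.r.t. the Lebesgue-Stieltjes measure of s.\<close>
definition gen_ode_solves ::
  "real measure \<Rightarrow> (real \<Rightarrow> real) \<Rightarrow> (real \<Rightarrow> real) \<Rightarrow> real set \<Rightarrow> (real \<Rightarrow> real) \<Rightarrow> bool" where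
  "gen_ode_solves m s g S f \<longleftrightarrow>
     (\<exists>Df. \<forall>x\<in>S. \<forall>y\<in>S. x < y \<longrightarrow>
        set_integrable (interval_measure s) {x<..y} Df \<and>
        f y - f x = (LINT t:{x<..y}|interval_measure s. Df t) \<and>
        set_integrable m {x<..y} g \<and>
        Df y - Df x = 2 * (LINT t:{x<..y}|m. g t))"

definition Xstar ::
  "real set \<Rightarrow> (real \<Rightarrow> real \<Rightarrow> real) \<Rightarrow> (real \<Rightarrow> real) \<Rightarrow> (real \<Rightarrow> real) \<Rightarrow> real \<Rightarrow> real set" where
  "Xstar J G R \<phi> \<theta> = {x \<in> J. \<forall>y\<in>J. (G y \<theta> - R y) / \<phi> y \<le> (G x \<theta> - R x) / \<phi> x}"

end

theory Submission
  imports Defs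
begin

theorem lemma4p13:
  fixes \<rho> :: real and \<Theta> :: "real set" and V :: "real \<Rightarrow> real"
    and G :: "real \<Rightarrow> real \<Rightarrow> real" and c :: "real \<Rightarrow> real" and X0 :: real
    and m :: "real measure" and s :: "real \<Rightarrow> real" and J :: "real set"
    and \<phi> :: "real \<Rightarrow> real" and Rms :: "real \<Rightarrow> real" and \<theta>s :: "real \<Rightarrow> real"
  assumes rho: "\<rho> > 0"
    and Theta: "is_interval \<Theta>"
    and V_diff: "\<forall>\<theta>\<in>\<Theta>. V differentiable (at \<theta> within \<Theta>)"
    and m_sets: "sets m = sets borel"
    and s_mono: "strict_mono s" and s_cont: "continuous_on UNIV s"
    and J_int: "is_interval J" and X0_J: "X0 \<in> J"
    and phi_ode: "gen_ode_solves m s (\<lambda>x. \<rho> * \<phi> x) J \<phi>"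
    and phi_pos: "\<forall>x\<in>J. \<phi> x > 0"
    and phi_mono: "mono_on J \<phi>"
    and phi_X0: "\<phi> X0 = 1"
    and theta_range: "\<theta>s ` J \<subseteq> \<Theta>"
    and consistent: "\<forall>x \<in> (\<Union>\<theta>\<in>\<Theta>. Xstar J G Rms \<phi> \<theta>). x \<in> Xstar J G Rms \<phi> (\<theta>s x)"
    and R_solves: "gen_ode_solves m s
         (\<lambda>x. \<rho> * (G x (\<theta>s x) + \<phi> x * (Rms X0 - V (\<theta>s x))) - c x)
         (\<Union>\<theta>\<in>\<Theta>. Xstar J G Rms \<phi> \<theta>)
         (\<lambda>x. G x (\<theta>s x) + \<phi> x * (Rms X0 - V (\<theta>s x)))"
  shows "gen_ode_solves m s
         (\<lambda>x. \<rho> * (G x (\<theta>s x) - \<phi> x * V (\<theta>s x)) - c x)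
         (\<Union>\<theta>\<in>\<Theta>. Xstar J G Rms \<phi> \<theta>)
         (\<lambda>x. G x (\<theta>s x) - \<phi> x * V (\<theta>s x))"
proof -
  define S where "S = (\<Union>\<theta>\<in>\<Theta>. Xstar J G Rms \<phi> \<theta>)"
  define k where "k = Rms X0"
  have SJ: "S \<subseteq> J" unfolding S_def Xstar_def by auto
  obtain Dp where Dp: "\<forall>x\<in>J. \<forall>y\<in>J. x < y \<longrightarrow>
        set_integrable (interval_measure s) {x<..y} Dp \<and>
        \<phi> y - \<phi> x = (LINT t:{x<..y}|interval_measure s. Dp t) \<and>
        set_integrable m {x<..y} (\<lambda>x. \<rho> * \<phi> x) \<and>
        Dp y - Dp x = 2 * (LINT t:{x<..y}|m. \<rho> * \<phi> t)"
    using phi_ode unfolding gen_ode_solves_def by blast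
  obtain DR where DR: "\<forall>x\<in>S. \<forall>y\<in>S. x < y \<longrightarrow>
        set_integrable (interval_measure s) {x<..y} DR \<and>
        (G y (\<theta>s y) + \<phi> y * (k - V (\<theta>s y))) - (G x (\<theta>s x) + \<phi> x * (k - V (\<theta>s x)))
          = (LINT t:{x<..y}|interval_measure s. DR t) \<and>
        set_integrable m {x<..y} (\<lambda>x. \<rho> * (G x (\<theta>s x) + \<phi> x * (k - V (\<theta>s x))) - c x) \<and>
        DR y - DR x = 2 * (LINT t:{x<..y}|m. \<rho> * (G t (\<theta>s t) + \<phi> t * (k - V (\<theta>s t))) - c t)"
    using R_solves unfolding gen_ode_solves_def S_def k_def by blast
  show ?thesis
    unfolding gen_ode_solves_def S_def[symmetric]
  proof (intro exI[of _ "\<lambda>t. DR t - k * Dp t"] ballI impI)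
    fix x y assume x: "x \<in> S" and y: "y \<in> S" and xy: "x < y"
    have xJ: "x \<in> J" and yJ: "y \<in> J" using x y SJ by auto
    note P = Dp[rule_format, OF xJ yJ xy]
    note Q = DR[rule_format, OF x y xy]
    have i1: "set_integrable (interval_measure s) {x<..y} (\<lambda>t. k * Dp t)"
      using P by (intro set_integrable_mult_right) auto
    have i2: "set_integrable m {x<..y} (\<lambda>t. k * (\<rho> * \<phi> t))"
      using P by (intro set_integrable_mult_right) auto
    have eqg: "(\<lambda>t. \<rho> * (G t (\<theta>s t) - \<phi> t * V (\<theta>s t)) - c t)
       = (\<lambda>t. (\<rho> * (G t (\<theta>s t) + \<phi> t * (k - V (\<theta>s t))) - c t) - k * (\<rho> * \<phi> t))"
      by (auto simp: algebra_simps)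
    show "set_integrable (interval_measure s) {x<..y} (\<lambda>t. DR t - k * Dp t) \<and>
        G y (\<theta>s y) - \<phi> y * V (\<theta>s y) - (G x (\<theta>s x) - \<phi> x * V (\<theta>s x)) =
        (LINT t:{x<..y}|interval_measure s. DR t - k * Dp t) \<and>
        set_integrable m {x<..y} (\<lambda>x. \<rho> * (G x (\<theta>s x) - \<phi> x * V (\<theta>s x)) - c x) \<and>
        DR y - k * Dp y - (DR x - k * Dp x) =
        2 * (LINT t:{x<..y}|m. \<rho> * (G t (\<theta>s t) - \<phi> t * V (\<theta>s t)) - c t)"
    proof (intro conjI)
      show "set_integrable (interval_measure s) {x<..y} (\<lambda>t. DR t - k * Dp t)"
        using set_integral_diff(1)[OF Q[THEN conjunct1] i1] .
      have "(LINT t:{x<..y}|interval_measure s. DR t - k * Dp t)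
          = (LINT t:{x<..y}|interval_measure s. DR t) - k * (LINT t:{x<..y}|interval_measure s. Dp t)"
        using Q i1 P by (simp add: set_integral_diff(2) set_integral_mult_right)
      then show "G y (\<theta>s y) - \<phi> y * V (\<theta>s y) - (G x (\<theta>s x) - \<phi> x * V (\<theta>s x)) =
        (LINT t:{x<..y}|interval_measure s. DR t - k * Dp t)"
        using Q P by (simp add: algebra_simps)
      show "set_integrable m {x<..y} (\<lambda>x. \<rho> * (G x (\<theta>s x) - \<phi> x * V (\<theta>s x)) - c x)"
        unfolding eqg using set_integral_diff(1)[OF Q[THEN conjunct2, THEN conjunct2, THEN conjunct1] i2] .
      have "(LINT t:{x<..y}|m. \<rho> * (G t (\<theta>s t) - \<phi> t * V (\<theta>s t)) - c t)
         = (LINT t:{x<..y}|m. \<rho> * (G t (\<theta>s t) + \<phi> t * (k - V (\<theta>s t))) - c t)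
           - k * (LINT t:{x<..y}|m. \<rho> * \<phi> t)"
        unfolding eqg using Q i2 P by (simp add: set_integral_diff(2) set_integral_mult_right)
      then show "DR y - k * Dp y - (DR x - k * Dp x) =
        2 * (LINT t:{x<..y}|m. \<rho> * (G t (\<theta>s t) - \<phi> t * V (\<theta>s t)) - c t)"
        using Q P by (simp add: algebra_simps)
    qed
  qed
qed

end
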